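(* Let $1\le k\le d$ be integers, let $(p_m)_{m\in\mathbb Z}$ be the sequence defined below, and let $a,b,\mu$ be integers with $k+a\ge0$. Then $$\sum_{m=-\infty}^{\mu}p_{\mu-m}\binom{d+a}{m+b}=\sum_{m=-b}^{\mu}(d-k)^{\mu-m}\binom{k+a}{m+b}$$ (both sums have finitely many nonzero terms; an empty sum is $0$).
   Context: Sequence: $p_m=0$ for $m<0$, $p_0=1$, and $p_m=\sum_{\ell=1}^{m}(\ell-1)\binom{d-k+1}{\ell}p_{m-\ell}$ for $m\ge1$. Conventions: $0^0=1$; for integers $N\ge0$, $\binom{N}{r}$ is the usual binomial coefficient for $0\le r\le N$ and $0$ for $r<0$ or $r>N$. *)

theory Defs
  imports Main
begin

definition binomZ :: "int \<Rightarrow> int \<Rightarrow> int" where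
  "binomZ N r = (if 0 \<le> r \<and> r \<le> N then int (nat N choose nat r) else 0)"

function pseq :: "nat \<Rightarrow> nat \<Rightarrow> int \<Rightarrow> int" where
  "pseq d k m = (if m < 0 then 0 else if m = 0 then 1 else
     (\<Sum>l\<in>{1..m}. (l - 1) * binomZ (int d - int k + 1) l * pseq d k (m - l)))"
  by pat_completeness auto
termination
  by (relation "measure (\<lambda>(d, k, m). nat m)") auto

declare pseq.simps [simp del]

end

theory Submission imports Defs "HOL-Computational_Algebra.Formal_Power_Series" begin
unbundle fps_syntax

lemma binom_fps: "((1 + fps_X :: int fps) ^ n) $ i = int (n choose i)"
proof (induction n arbitrary: i)
  case 0 then show ?case by (cases i) auto
next
  case (Suc n)
  have "((1 + fps_X :: int fps) ^ Suc n) = (1 + fps_X)^n + fps_X * (1 + fps_X)^n"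
    by (simp add: algebra_simps)
  then show ?case using Suc by (cases i) auto
qed

lemma pseq_rec_nat:
  assumes "m > 0" "k \<le> d"
  shows "pseq d k (int m) = (\<Sum>l\<in>{1..m}. (int l - 1) * int (Suc (d-k) choose l) * pseq d k (int (m-l)))"
proof -
  have "pseq d k (int m) = (\<Sum>l\<in>{1..int m}. (l - 1) * binomZ (int d - int k + 1) l * pseq d k (int m - l))"
  proof -
    have c1: "\<not> int m < 0" "int m \<noteq> 0" using assms by auto
    show ?thesis by (subst pseq.simps[of d k "int m"]) (simp only: c1 if_False)
  qed
  also have "\<dots> = (\<Sum>l\<in>int ` {1..m}. (l - 1) * binomZ (int d - int k + 1) l * pseq d k (int m - l))"
    by (simp add: image_int_atLeastAtMost)
  also have "\<dots> = (\<Sum>l\<in>{1..m}. (int l - 1) * binomZ (int d - int k + 1) (int l) * pseq d k (int m - int l))"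
    using sum.reindex[of int "{1..m}" "\<lambda>l. (l - 1) * binomZ (int d - int k + 1) l * pseq d k (int m - l)"]
    by (simp add: inj_on_def comp_def)
  also have "\<dots> = (\<Sum>l\<in>{1..m}. (int l - 1) * int (Suc (d-k) choose l) * pseq d k (int (m-l)))"
  proof (rule sum.cong)
    fix l assume l: "l \<in> {1..m}"
    have e: "int d - int k + 1 = int (Suc (d-k))" using assms by simp
    have b: "binomZ (int (Suc (d-k))) (int l) = int (Suc (d-k) choose l)"
      unfolding binomZ_def nat_int by (auto simp: binomial_eq_0 simp del: of_nat_Suc)
    have mm: "int m - int l = int (m - l)" using l by auto
    show "(int l - 1) * binomZ (int d - int k + 1) (int l) * pseq d k (int m - int l) = (int l - 1) * int (Suc (d-k) choose l) * pseq d k (int (m-l))"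
      by (simp only: e b mm)
  qed simp
  finally show ?thesis .
qed

lemma pseq0: "pseq d k 0 = 1"
  by (subst pseq.simps) simp

lemma fps_binZ: "binomZ (int e) (int j) = ((1 + fps_X :: int fps) ^ e) $ j"
  by (simp add: binom_fps binomZ_def binomial_eq_0)

lemma key_fps:
  assumes "k \<le> d"
  defines "P \<equiv> Abs_fps (\<lambda>m. pseq d k (int m))"
  shows "P * (1 + fps_X) ^ (d - k) = Abs_fps (\<lambda>m. int (d - k) ^ m)"
proof -
  define n where "n = d - k"
  define A :: "int fps" where "A = (1 + fps_X)^(Suc n) - fps_const (int (Suc n)) * (fps_X * (1 + fps_X)^n)"
  define L :: "int fps" where "L = 1 - fps_const (int n) * fps_X"
  define G :: "int fps" where "G = Abs_fps (\<lambda>m. int n ^ m)"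
  have A0: "A $ 0 = 1" by (simp add: A_def binom_fps)
  have AS: "A $ l = - (int l - 1) * int (Suc n choose l)" if lpos: "l > 0" for l
  proof -
    obtain j where j: "l = Suc j" using lpos by (cases l) auto
    have b1: "((1 + fps_X :: int fps)^(Suc n)) $ l = int (Suc n choose l)" by (rule binom_fps)
    have b2: "(fps_const (int (Suc n)) * (fps_X * (1 + fps_X :: int fps)^n)) $ l = int (Suc n) * int (n choose j)"
      by (simp only: fps_mult_left_const_nth fps_X_mult_nth binom_fps j) simp
    have "A $ l = int (Suc n choose l) - int (Suc n) * int (n choose j)"
      unfolding A_def fps_sub_nth b1 b2 ..
    also have "int (Suc n) * int (n choose j) = int (Suc j) * int (Suc n choose Suc j)"
      using Suc_times_binomial[of j n] by (metis of_nat_mult)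
    finally show ?thesis using j by (simp add: algebra_simps)
  qed
  have AP: "A * P = 1"
  proof (rule fps_ext)
    fix m
    show "(A * P) $ m = (1::int fps) $ m"
    proof (cases "m = 0")
      case True then show ?thesis using A0 by (simp add: P_def pseq0)
    next
      case False
      have "(A * P) $ m = (\<Sum>i=0..m. A$i * P$(m-i))" by (rule fps_mult_nth)
      also have "\<dots> = A$0 * P$m + (\<Sum>i=Suc 0..m. A$i * P$(m-i))"
        using False by (simp add: sum.atLeast_Suc_atMost)
      also have "(\<Sum>i=Suc 0..m. A$i * P$(m-i)) = - (\<Sum>l\<in>{1..m}. (int l - 1) * int (Suc (d-k) choose l) * pseq d k (int (m-l)))"
        unfolding sum_negf[symmetric] by (rule sum.cong) (auto simp: AS P_def n_def algebra_simps)
      also have "(\<Sum>l\<in>{1..m}. (int l - 1) * int (Suc (d-k) choose l) * pseq d k (int (m-l))) = P $ m"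
        using pseq_rec_nat[of m k d] False assms by (simp add: P_def)
      finally show ?thesis using A0 False by simp
    qed
  qed
  have AQL: "A = (1 + fps_X)^n * L"
  proof -
    have "fps_const (int (Suc n)) = (1::int fps) + fps_const (int n)"
      by (simp add: fps_const_add[symmetric])
    then show ?thesis by (simp add: A_def L_def algebra_simps)
  qed
  have GL: "G * L = 1"
  proof (rule fps_ext)
    fix m
    show "(G * L) $ m = (1::int fps) $ m"
      by (cases m) (simp_all add: G_def L_def algebra_simps)
  qed
  have "P * (1 + fps_X) ^ n = P * (1 + fps_X) ^ n * (L * G)" using GL by (simp add: mult.commute)
  also have "\<dots> = (A * P) * G" by (simp add: AQL algebra_simps)
  also have "\<dots> = G" using AP by simp
  finally show ?thesis by (simp add: G_def n_def)
qed

theorem lemma4: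
  fixes d k :: nat and a b \<mu> :: int
  assumes "1 \<le> k" and "k \<le> d" and "int k + a \<ge> 0"
  shows "finite {m. m \<le> \<mu> \<and> pseq d k (\<mu> - m) * binomZ (int d + a) (m + b) \<noteq> 0}
    \<and> (\<Sum>m\<in>{m. m \<le> \<mu> \<and> pseq d k (\<mu> - m) * binomZ (int d + a) (m + b) \<noteq> 0}.
          pseq d k (\<mu> - m) * binomZ (int d + a) (m + b))
      = (\<Sum>m\<in>{-b..\<mu>}. int (d - k) ^ nat (\<mu> - m) * binomZ (int k + a) (m + b))"
proof -
  define f where "f m = pseq d k (\<mu> - m) * binomZ (int d + a) (m + b)" for m
  define S where "S = {m. m \<le> \<mu> \<and> f m \<noteq> 0}"
  have sub: "S \<subseteq> {-b..\<mu>}"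
    by (auto simp: S_def f_def binomZ_def)
  have fin: "finite S" using sub finite_subset by blast
  have sumS: "sum f S = sum f {-b..\<mu>}"
    by (rule sum.mono_neutral_left) (use sub in \<open>auto simp: S_def\<close>)
  define n where "n = d - k"
  define P :: "int fps" where "P = Abs_fps (\<lambda>m. pseq d k (int m))"
  define G :: "int fps" where "G = Abs_fps (\<lambda>m. int n ^ m)"
  define e where "e = nat (int k + a)"
  have de: "nat (int d + a) = e + n" using assms by (simp add: e_def n_def)
  have ke: "int k + a = int e" using assms by (simp add: e_def)
  have dae: "int d + a = int (e + n)" using assms by (simp add: e_def n_def)
  have PG: "P * (1 + fps_X) ^ n = G" unfolding P_def G_def n_def using key_fps[OF assms(2)] by simp
  have main: "sum f {-b..\<mu>} = (\<Sum>m\<in>{-b..\<mu>}. int n ^ nat (\<mu> - m) * binomZ (int k + a) (m + b))"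
  proof (cases "\<mu> + b < 0")
    case True then show ?thesis by simp
  next
    case False
    define N where "N = nat (\<mu> + b)"
    define h where "h j = int j - b" for j :: nat
    have inj: "inj_on h {0..N}" by (auto simp: h_def inj_on_def)
    have img: "h ` {0..N} = {-b..\<mu>}"
    proof
      show "h ` {0..N} \<subseteq> {-b..\<mu>}" using False by (auto simp: h_def N_def)
      show "{-b..\<mu>} \<subseteq> h ` {0..N}"
      proof
        fix m assume m: "m \<in> {-b..\<mu>}"
        then have "m = h (nat (m + b))" "nat (m + b) \<in> {0..N}" by (auto simp: h_def N_def)
        then show "m \<in> h ` {0..N}" by blast
      qed
    qed
    have mu: "\<mu> - h j = int (N - j)" if "j \<le> N" for j
      using that False by (simp add: h_def N_def)
    have mu2: "nat (\<mu> - h j) = N - j" if "j \<le> N" for j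
      using mu[OF that] by simp
    have hb: "h j + b = int j" for j by (simp add: h_def)
    have "sum f {-b..\<mu>} = (\<Sum>j=0..N. f (h j))"
      by (subst img[symmetric], subst sum.reindex[OF inj]) simp
    also have "\<dots> = (\<Sum>j=0..N. ((1 + fps_X)^(e+n)) $ j * P $ (N - j))"
      by (rule sum.cong) (auto simp: f_def mu P_def dae hb fps_binZ[symmetric] simp del: of_nat_add)
    also have "\<dots> = ((1 + fps_X)^(e+n) * P) $ N" by (simp add: fps_mult_nth)
    also have "(1 + fps_X)^(e+n) * P = (1 + fps_X)^e * G"
      by (simp add: PG[symmetric] power_add algebra_simps)
    also have "((1 + fps_X)^e * G) $ N = (\<Sum>j=0..N. ((1 + fps_X)^e) $ j * G $ (N - j))"
      by (simp add: fps_mult_nth)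
    also have "\<dots> = (\<Sum>j=0..N. int n ^ nat (\<mu> - h j) * binomZ (int k + a) (h j + b))"
      by (rule sum.cong) (auto simp: mu2 G_def ke hb fps_binZ[symmetric])
    also have "\<dots> = (\<Sum>m\<in>{-b..\<mu>}. int n ^ nat (\<mu> - m) * binomZ (int k + a) (m + b))"
      by (subst img[symmetric], subst sum.reindex[OF inj]) simp
    finally show ?thesis .
  qed
  show ?thesis using fin sumS main by (simp add: S_def f_def n_def)
qed

end
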